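(* Let $P_1,\ldots,P_n$ be pairwise distinct linear orders on a finite set of alternatives $A$, and let $k_1,\ldots,k_n$ be positive integers. Let $Q=(P_1^{k_1},\ldots,P_n^{k_n})$ be the profile in which the linear order $P_i$ appears $k_i$ times (each copy held by a distinct voter). Then the profile $P=(P_1,\ldots,P_n)$ is single-crossing with respect to some tree on its voter set if and only if $Q$ is single-crossing with respect to some tree on its voter set.
   Context: A profile is a finite tuple of linear orders on $A$, one for each voter; voter $i$ prefers $a$ to $b$, written $a\succ_i b$. Given a tree $T=(V,E)$ whose vertex set $V$ is the set of voters, the profile is single-crossing with respect to $T$ if for every pair of distinct alternatives $a,b$ one of the following holds: (i) there is an edge $e\in E$ (an "$ab$-cut") such that, removing $e$ from $T$, the two resulting subtrees have vertex sets $V_1,V_2$ with all voters in $V_1$ preferring $a$ to $b$ and all voters in $V_2$ preferring $b$ to $a$; or (ii) all voters prefer $a$ to $b$, or all voters prefer $b$ to $a$. *)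

theory Defs
  imports Main
begin

definition prefers :: "'a rel \<Rightarrow> 'a \<Rightarrow> 'a \<Rightarrow> bool" where
  "prefers r a b \<longleftrightarrow> (a, b) \<in> r \<and> a \<noteq> b"

definition reach :: "'v set set \<Rightarrow> 'v \<Rightarrow> 'v \<Rightarrow> bool" where
  "reach E u w \<longleftrightarrow> (u, w) \<in> {(x, y). {x, y} \<in> E}\<^sup>*"

text \<open>A tree on vertex set V: a simple graph that is connected and acyclic
  (acyclic = every edge is a bridge, i.e. removing it disconnects its endpoints).\<close>
definition is_tree :: "'v set \<Rightarrow> 'v set set \<Rightarrow> bool" where
  "is_tree V E \<longleftrightarrow>
     (\<forall>e\<in>E. \<exists>u w. e = {u, w} \<and> u \<noteq> w \<and> u \<in> V \<and> w \<in> V) \<and>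
     (\<forall>u\<in>V. \<forall>w\<in>V. reach E u w) \<and>
     (\<forall>u w. {u, w} \<in> E \<and> u \<noteq> w \<longrightarrow> \<not> reach (E - {{u, w}}) u w)"

definition ab_cut :: "'v set \<Rightarrow> ('v \<Rightarrow> 'a rel) \<Rightarrow> 'v set set \<Rightarrow> 'a \<Rightarrow> 'a \<Rightarrow> bool" where
  "ab_cut V prof E a b \<longleftrightarrow>
     (\<exists>u w. {u, w} \<in> E \<and> u \<noteq> w \<and>
        (\<forall>x\<in>V. reach (E - {{u, w}}) u x \<longrightarrow> prefers (prof x) a b) \<and>
        (\<forall>x\<in>V. reach (E - {{u, w}}) w x \<longrightarrow> prefers (prof x) b a))"

definition single_crossing_tree ::
  "'a set \<Rightarrow> 'v set \<Rightarrow> ('v \<Rightarrow> 'a rel) \<Rightarrow> 'v set set \<Rightarrow> bool" where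
  "single_crossing_tree A V prof E \<longleftrightarrow>
     (\<forall>a\<in>A. \<forall>b\<in>A. a \<noteq> b \<longrightarrow>
        ab_cut V prof E a b \<or>
        (\<forall>x\<in>V. prefers (prof x) a b) \<or> (\<forall>x\<in>V. prefers (prof x) b a))"

end

theory Submission
  imports Defs
begin


lemma reach_refl[simp]: "reach E u u" by (simp add: reach_def)

lemma reach_step: "reach E u v \<Longrightarrow> {v,w} \<in> E \<Longrightarrow> reach E u w"
  unfolding reach_def by (rule rtrancl_into_rtrancl) auto

lemma reach_edge: "{u,w} \<in> E \<Longrightarrow> reach E u w"
  using reach_step[of E u u w] by simp

lemma reach_induct[consumes 1, case_names base step]:
  assumes "reach E u w" "P u" "\<And>x y. P x \<Longrightarrow> {x,y} \<in> E \<Longrightarrow> P y"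
  shows "P w"
  using assms(1) unfolding reach_def
proof (induction rule: rtrancl_induct)
  case base then show ?case using assms(2) by simp
next
  case (step y z) then show ?case using assms(3) by auto
qed

lemma reach_trans: "reach E u v \<Longrightarrow> reach E v w \<Longrightarrow> reach E u w"
  unfolding reach_def by (rule rtrancl_trans)

lemma reach_sym: "reach E u w \<Longrightarrow> reach E w u"
proof (induction rule: reach_induct)
  case base then show ?case by simp
next
  case (step x y)
  have "{y,x} \<in> E" using step by (simp add: insert_commute)
  then show ?case using step reach_trans reach_edge by metis
qed

lemma reach_mono: assumes "E \<subseteq> E'" "reach E u w" shows "reach E' u w"
  using assms(2) by (induction rule: reach_induct) (use assms(1) in \<open>auto intro: reach_step\<close>)

lemma reach_map:
  assumes "reach E u w" "\<And>x y. {x,y} \<in> E \<Longrightarrow> h x = h y \<or> {h x, h y} \<in> E'"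
  shows "reach E' (h u) (h w)"
  using assms(1)
proof (induction rule: reach_induct)
  case base then show ?case by simp
next
  case (step x y) then show ?case using assms(2)[of x y] by (auto intro: reach_step)
qed

lemma edge_eq: "{x,y} = {u,w} \<longleftrightarrow> (x = u \<and> y = w) \<or> (x = w \<and> y = u)"
  by (auto simp: doubleton_eq_iff)

lemma tree_edgeV: "is_tree V E \<Longrightarrow> {x,y} \<in> E \<Longrightarrow> x \<in> V \<and> y \<in> V"
  unfolding is_tree_def by (metis doubleton_eq_iff)

lemma sides:
  assumes "reach E u x"
  shows "reach (E - {{u,w}}) u x \<or> reach (E - {{u,w}}) w x"
  using assms
proof (induction rule: reach_induct)
  case base then show ?case by simp
next
  case (step x y)
  show ?case
  proof (cases "{x,y} = {u,w}")
    case True then have "y = u \<or> y = w" by (auto simp: doubleton_eq_iff)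
    then show ?thesis by auto
  next
    case False then have "{x,y} \<in> E - {{u,w}}" using step by auto
    then show ?thesis using step reach_step by metis
  qed
qed



definition same :: "'a set \<Rightarrow> ('v \<Rightarrow> 'a rel) \<Rightarrow> 'v \<Rightarrow> 'v \<Rightarrow> bool" where
  "same A p x y \<longleftrightarrow> (\<forall>a\<in>A. \<forall>b\<in>A. prefers (p x) a b \<longleftrightarrow> prefers (p y) a b)"

definition strict :: "'a set \<Rightarrow> ('v \<Rightarrow> 'a rel) \<Rightarrow> 'v set \<Rightarrow> bool" where
  "strict A p V \<longleftrightarrow> (\<forall>x\<in>V. \<forall>a\<in>A. \<forall>b\<in>A. a \<noteq> b \<longrightarrow> (prefers (p x) a b \<longleftrightarrow> \<not> prefers (p x) b a))"

lemma cut_side: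
  assumes tree: "is_tree V E" and st: "strict A p V" and ab: "a \<in> A" "b \<in> A" "a \<noteq> b"
    and e: "{u,w} \<in> E"
    and su: "\<forall>x\<in>V. reach (E - {{u,w}}) u x \<longrightarrow> prefers (p x) a b"
    and sw: "\<forall>x\<in>V. reach (E - {{u,w}}) w x \<longrightarrow> prefers (p x) b a"
    and x: "x \<in> V"
  shows "prefers (p x) a b \<longleftrightarrow> reach (E - {{u,w}}) u x"
proof -
  have uV: "u \<in> V" using tree_edgeV[OF tree e] by simp
  have "reach E u x" using tree uV x unfolding is_tree_def by blast
  then have "reach (E - {{u,w}}) u x \<or> reach (E - {{u,w}}) w x" by (rule sides)
  then show ?thesis
  proof
    assume "reach (E - {{u,w}}) u x" then show ?thesis using su x by auto
  next
    assume h: "reach (E - {{u,w}}) w x"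
    then have "prefers (p x) b a" using sw x by auto
    then have "\<not> prefers (p x) a b" using st x ab unfolding strict_def by blast
    then show ?thesis using su x by auto
  qed
qed

lemma cut_cross:
  assumes tree: "is_tree V E" and st: "strict A p V" and ab: "a \<in> A" "b \<in> A" "a \<noteq> b"
    and e: "{u,w} \<in> E"
    and su: "\<forall>x\<in>V. reach (E - {{u,w}}) u x \<longrightarrow> prefers (p x) a b"
    and sw: "\<forall>x\<in>V. reach (E - {{u,w}}) w x \<longrightarrow> prefers (p x) b a"
    and xz: "{x,z} \<in> E" "{x,z} \<noteq> {u,w}"
  shows "prefers (p x) a b \<longleftrightarrow> prefers (p z) a b"
proof -
  have V: "x \<in> V" "z \<in> V" using tree_edgeV[OF tree xz(1)] by auto
  have ed: "{x,z} \<in> E - {{u,w}}" "{z,x} \<in> E - {{u,w}}" using xz by (auto simp: insert_commute)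
  have "reach (E - {{u,w}}) u x \<longleftrightarrow> reach (E - {{u,w}}) u z"
    using reach_step[OF _ ed(1)] reach_step[OF _ ed(2)] by blast
  then show ?thesis using cut_side[OF tree st ab e su sw] V by simp
qed

lemma cut_unique:
  assumes st: "strict A p V" and ab: "a \<in> A" "b \<in> A" "a \<noteq> b"
    and e: "{u,w} \<in> E" "u \<noteq> w" and V: "u \<in> V" "w \<in> V"
    and pu: "prefers (p u) a b" and pw: "prefers (p w) b a"
    and H: "\<And>x y. {x,y} \<in> E - {{u,w}} \<Longrightarrow> (prefers (p x) a b \<longleftrightarrow> prefers (p y) a b)"
  shows "ab_cut V p E a b"
  unfolding ab_cut_def
proof (intro exI conjI ballI impI)
  show "{u,w} \<in> E" "u \<noteq> w" by fact+
  fix x assume "x \<in> V" "reach (E - {{u,w}}) u x"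
  from this(2) have "prefers (p x) a b = prefers (p u) a b"
    by (induction rule: reach_induct) (use H in auto)
  then show "prefers (p x) a b" using pu by simp
next
  fix x assume x: "x \<in> V" "reach (E - {{u,w}}) w x"
  from this(2) have "prefers (p x) a b = prefers (p w) a b"
    by (induction rule: reach_induct) (use H in auto)
  moreover have "\<not> prefers (p w) a b" using st V pw ab unfolding strict_def by blast
  ultimately show "prefers (p x) b a" using st x ab unfolding strict_def by blast
qed

lemma exit_lemma:
  assumes "reach E y z" "y \<notin> C"
  shows "reach {e\<in>E. e \<inter> C = {}} y z \<or>
    (\<exists>d c. d \<notin> C \<and> c \<in> C \<and> {d,c} \<in> E \<and> reach {e\<in>E. e \<inter> C = {}} y d)"
  using assms(1)
proof (induction rule: reach_induct)
  case base then show ?case by (rule disjI1) (rule reach_refl)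
next
  case (step x0 y1)
  show ?case
  proof (cases "reach {e\<in>E. e \<inter> C = {}} y x0")
    case False
    then have "\<exists>d c. d \<notin> C \<and> c \<in> C \<and> {d,c} \<in> E \<and> reach {e\<in>E. e \<inter> C = {}} y d" using step.IH by simp
    then show ?thesis by (rule disjI2)
  next
    case True
    have x0: "x0 \<notin> C" using True
    proof (induction rule: reach_induct)
      case base show ?case by (rule assms(2))
    next
      case (step s t)
      then have "{s,t} \<inter> C = {}" by simp
      then show ?case by blast
    qed
    show ?thesis
    proof (cases "y1 \<in> C")
      case True
      have "\<exists>d c. d \<notin> C \<and> c \<in> C \<and> {d,c} \<in> E \<and> reach {e\<in>E. e \<inter> C = {}} y d"
        using x0 True step(2) \<open>reach _ y x0\<close> proof (intro exI conjI)
          show "x0 \<notin> C" by (fact x0)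
          show "y1 \<in> C" by fact
          show "{x0,y1} \<in> E" by (fact step(2))
          show "reach {e\<in>E. e \<inter> C = {}} y x0" by fact
        qed
      then show ?thesis by (rule disjI2)
    next
      case False
      then have "{x0,y1} \<in> {e\<in>E. e \<inter> C = {}}" using x0 step(2) by auto
      then have "reach {e\<in>E. e \<inter> C = {}} y y1" by (rule reach_step[OF \<open>reach _ y x0\<close>])
      then show ?thesis by (rule disjI1)
    qed
  qed
qed

lemma same_sym: "same A p x y \<Longrightarrow> same A p y x" unfolding same_def by auto
lemma same_trans: "same A p x y \<Longrightarrow> same A p y z \<Longrightarrow> same A p x z" unfolding same_def by auto


lemma strict_flip: "strict A p V \<Longrightarrow> x \<in> V \<Longrightarrow> a \<in> A \<Longrightarrow> b \<in> A \<Longrightarrow> a \<noteq> b \<Longrightarrow>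
  \<not> prefers (p x) a b \<Longrightarrow> prefers (p x) b a"
  unfolding strict_def by blast
lemma strict_not: "strict A p V \<Longrightarrow> x \<in> V \<Longrightarrow> a \<in> A \<Longrightarrow> b \<in> A \<Longrightarrow> a \<noteq> b \<Longrightarrow>
  prefers (p x) b a \<Longrightarrow> \<not> prefers (p x) a b"
  unfolding strict_def by blast
lemma sc_cases:
  assumes "single_crossing_tree A V p E" "a \<in> A" "b \<in> A" "a \<noteq> b"
  obtains (cut) u w where "{u,w} \<in> E" "u \<noteq> w"
      "\<forall>z\<in>V. reach (E - {{u,w}}) u z \<longrightarrow> prefers (p z) a b"
      "\<forall>z\<in>V. reach (E - {{u,w}}) w z \<longrightarrow> prefers (p z) b a"
  | (ab) "\<forall>x\<in>V. prefers (p x) a b" | (ba) "\<forall>x\<in>V. prefers (p x) b a"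
  using assms unfolding single_crossing_tree_def ab_cut_def by blast

lemma reach_out: assumes "reach {e\<in>E. e \<inter> C = {}} y z" "y \<notin> C" shows "z \<notin> C"
  using assms(1)
proof (induction rule: reach_induct)
  case base show ?case by (rule assms(2))
next
  case (step s t)
  then have "{s,t} \<inter> C = {}" by simp
  then show ?case by blast
qed

lemma fiber_conn:
  assumes tree: "is_tree V E" and sc: "single_crossing_tree A V p E" and st: "strict A p V"
    and x: "x \<in> V" and y: "y \<in> V" and sxy: "same A p x y"
  shows "reach {e\<in>E. \<exists>s t. e = {s,t} \<and> same A p s t} x y"
proof (rule ccontr)
  define E' where "E' = {e\<in>E. \<exists>s t. e = {s,t} \<and> same A p s t}"
  define C where "C = {z. reach E' x z}"
  assume "\<not> ?thesis"
  then have yC: "y \<notin> C" unfolding C_def E'_def by simp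
  have "reach E y x" using tree x y unfolding is_tree_def by blast
  moreover have "x \<in> C" unfolding C_def by simp
  ultimately have "\<exists>d c. d \<notin> C \<and> c \<in> C \<and> {d,c} \<in> E \<and> reach {e\<in>E. e \<inter> C = {}} y d"
    using exit_lemma[of E y x C] yC reach_out[of E C y x] by blast
  then obtain d c where dc: "d \<notin> C" "c \<in> C" "{d,c} \<in> E" "reach {e\<in>E. e \<inter> C = {}} y d"
    by blast
  have sxc: "same A p x c" using dc(2) unfolding C_def
  proof -
    assume "c \<in> {z. reach E' x z}"
    then have "reach E' x c" by simp
    then show ?thesis
    proof (induction rule: reach_induct)
      case base then show ?case by (simp add: same_def)
    next
      case (step s t)
      then obtain s' t' where "{s,t} = {s',t'}" "same A p s' t'" unfolding E'_def by blast
      then have "same A p s t" by (auto simp: doubleton_eq_iff intro: same_sym)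
      then show ?case by (rule same_trans[OF step(1)])
    qed
  qed
  have cV: "c \<in> V" and dV: "d \<in> V" using tree_edgeV[OF tree dc(3)] by auto
  have nsame: "\<not> same A p c d"
  proof
    assume "same A p c d"
    then have e1: "{c,d} \<in> E'" unfolding E'_def using dc(3) by (auto simp: insert_commute)
    have e2: "reach E' x c" using dc(2) unfolding C_def by simp
    have "reach E' x d" by (rule reach_step[OF e2 e1])
    then show False using dc(1) unfolding C_def by simp
  qed
  obtain a b where ab: "a \<in> A" "b \<in> A" "a \<noteq> b" "prefers (p c) a b" "prefers (p d) b a"
  proof -
    obtain a b where ab0: "a \<in> A" "b \<in> A" "prefers (p c) a b \<noteq> prefers (p d) a b"
      using nsame unfolding same_def by blast
    then have neq: "a \<noteq> b" unfolding prefers_def by auto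
    show ?thesis
    proof (cases "prefers (p c) a b")
      case True
      then have "\<not> prefers (p d) a b" using ab0 by simp
      then have "prefers (p d) b a" by (rule strict_flip[OF st dV ab0(1,2) neq])
      then show ?thesis using that[of a b] ab0(1,2) neq True by simp
    next
      case False
      then have 1: "prefers (p c) b a" by (rule strict_flip[OF st cV ab0(1,2) neq])
      have 2: "prefers (p d) a b" using False ab0 by simp
      have "b \<noteq> a" using neq by simp
      then show ?thesis using that[of b a] ab0(1,2) 1 2 by simp
    qed
  qed
  have nab: "\<not> (\<forall>z\<in>V. prefers (p z) a b)" using ab(5) strict_not[OF st dV ab(1,2,3)] dV by blast
  have nba: "\<not> (\<forall>z\<in>V. prefers (p z) b a)"
  proof
    assume "\<forall>z\<in>V. prefers (p z) b a"
    then have "prefers (p c) b a" using cV by simp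
    with ab(4) strict_not[OF st cV ab(2,1)] ab(3) show False by simp
  qed
  obtain u w where cut: "{u,w} \<in> E" "u \<noteq> w"
      "\<forall>z\<in>V. reach (E - {{u,w}}) u z \<longrightarrow> prefers (p z) a b"
      "\<forall>z\<in>V. reach (E - {{u,w}}) w z \<longrightarrow> prefers (p z) b a"
    using sc_cases[OF sc ab(1,2,3)] nab nba by metis
  have dpab: "\<not> prefers (p d) a b" by (rule strict_not[OF st dV ab(1,2,3) ab(5)])
  have eq: "{d,c} = {u,w}"
  proof (rule ccontr)
    assume "{d,c} \<noteq> {u,w}"
    from cut_cross[OF tree st ab(1-3) cut(1) cut(3) cut(4) dc(3) this] ab(4) dpab show False by simp
  qed
  have sxy': "same A p c y" using same_trans[OF same_sym[OF sxc] sxy] .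
  have "prefers (p y) a b" using sxy' ab(1,2,4) unfolding same_def by simp
  then have ry: "reach (E - {{u,w}}) u y" using cut_side[OF tree st ab(1-3) cut(1) cut(3) cut(4) y] by simp
  have "reach {e\<in>E. e \<inter> C = {}} y d" by fact
  moreover have "{e\<in>E. e \<inter> C = {}} \<subseteq> E - {{u,w}}" using eq dc(2) by auto
  ultimately have "reach (E - {{u,w}}) y d" by (rule reach_mono[rotated])
  then have "reach (E - {{u,w}}) u d" by (rule reach_trans[OF ry])
  then have "prefers (p d) a b" using cut_side[OF tree st ab(1-3) cut(1) cut(3) cut(4) dV] by simp
  then show False using dpab by simp
qed



lemma doubleton_cases: "{a,b} = {c,d} \<Longrightarrow> (a = c \<and> b = d) \<or> (a = d \<and> b = c)"
  by (auto simp: doubleton_eq_iff)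

lemma quot:
  assumes tree: "is_tree W E" and sc: "single_crossing_tree A W pW E"
    and stW: "strict A pW W" and stR: "strict A pR R"
    and gR: "\<forall>x\<in>W. g x \<in> R" and surj: "R \<subseteq> g ` W"
    and compat: "\<forall>x\<in>W. \<forall>a\<in>A. \<forall>b\<in>A. prefers (pW x) a b \<longleftrightarrow> prefers (pR (g x)) a b"
    and inj: "\<forall>x\<in>W. \<forall>y\<in>W. same A pW x y \<longrightarrow> g x = g y"
  shows "\<exists>E'. is_tree R E' \<and> single_crossing_tree A R pR E'"
proof -
  define ER where "ER = {{g x, g y} | x y. {x,y} \<in> E \<and> g x \<noteq> g y}"
  have EV: "\<And>x y. {x,y} \<in> E \<Longrightarrow> x \<in> W \<and> y \<in> W" using tree_edgeV[OF tree] by blast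
  have sameg: "same A pW x y" if "x \<in> W" "y \<in> W" "g x = g y" for x y
    using compat that unfolding same_def by simp
  have ERe: "\<exists>x y. {x,y} \<in> E \<and> g x = r \<and> g y = s \<and> r \<noteq> s" if hrs: "{r,s} \<in> ER" for r s
  proof -
    obtain x y where xy: "{r,s} = {g x, g y}" "{x,y} \<in> E" "g x \<noteq> g y" using hrs unfolding ER_def by blast
    from doubleton_cases[OF xy(1)] show ?thesis
    proof
      assume "r = g x \<and> s = g y" then show ?thesis using xy by blast
    next
      assume h: "r = g y \<and> s = g x"
      have "{y,x} \<in> E" using xy(2) by (simp add: insert_commute)
      then show ?thesis using h xy(3) by metis
    qed
  qed
  have ERi: "{g x, g y} \<in> ER" if "{x,y} \<in> E" "g x \<noteq> g y" for x y
    using that unfolding ER_def by blast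
  have conn: "reach ER (g x) (g y)" if "reach E x y" for x y
    using that by (rule reach_map) (use ERi in metis)
  have t1: "\<forall>e\<in>ER. \<exists>u w. e = {u, w} \<and> u \<noteq> w \<and> u \<in> R \<and> w \<in> R"
    unfolding ER_def using EV gR by blast
  have t2: "\<forall>u\<in>R. \<forall>w\<in>R. reach ER u w"
  proof (intro ballI)
    fix u w assume "u \<in> R" "w \<in> R"
    then obtain x y where "x \<in> W" "y \<in> W" "u = g x" "w = g y" using surj by blast
    moreover have "reach E x y" using tree \<open>x \<in> W\<close> \<open>y \<in> W\<close> unfolding is_tree_def by blast
    ultimately show "reach ER u w" using conn by simp
  qed
  define EF where "EF = {e\<in>E. \<exists>s t. e = {s,t} \<and> same A pW s t}"
  have t3: "\<not> reach (ER - {{p, q}}) p q" if pq: "{p,q} \<in> ER" "p \<noteq> q" for p q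
  proof
    assume rpq: "reach (ER - {{p, q}}) p q"
    obtain x y where xy: "{x,y} \<in> E" "g x = p" "g y = q" using ERe[OF pq(1)] by blast
    have xyW: "x \<in> W" "y \<in> W" using EV[OF xy(1)] by auto
    have EFsub: "EF \<subseteq> E - {{x,y}}"
    proof
      fix e assume "e \<in> EF"
      then obtain s t where st: "e \<in> E" "e = {s,t}" "same A pW s t" unfolding EF_def by blast
      have "e \<noteq> {x,y}"
      proof
        assume "e = {x,y}"
        then have "same A pW x y" using st doubleton_cases[of s t x y] same_sym by metis
        then have "g x = g y" using inj xyW by blast
        then show False using xy pq by simp
      qed
      then show "e \<in> E - {{x,y}}" using st by simp
    qed
    have fib: "reach (E - {{x,y}}) x' y'" if "x' \<in> W" "y' \<in> W" "g x' = g y'" for x' y'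
    proof -
      have "reach EF x' y'" unfolding EF_def
        by (rule fiber_conn[OF tree sc stW that(1,2) sameg[OF that]])
      then show ?thesis by (rule reach_mono[OF EFsub])
    qed
    have lift: "\<forall>y'\<in>W. g y' = s \<longrightarrow> reach (E - {{x,y}}) x y'" if "reach (ER - {{p, q}}) p s" for s
      using that
    proof (induction rule: reach_induct)
      case base show ?case
      proof (intro ballI impI)
        fix y' assume "y' \<in> W" "g y' = p"
        then show "reach (E - {{x,y}}) x y'" using fib[of x y'] xyW xy by simp
      qed
    next
      case (step s0 s1)
      then have e: "{s0,s1} \<in> ER" "{s0,s1} \<noteq> {p,q}" by auto
      obtain z0 z1 where z: "{z0,z1} \<in> E" "g z0 = s0" "g z1 = s1" using ERe[OF e(1)] by blast
      have zW: "z0 \<in> W" "z1 \<in> W" using EV[OF z(1)] by auto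
      have ne: "{z0,z1} \<noteq> {x,y}" using e(2) z xy by auto
      have r0: "reach (E - {{x,y}}) x z0" using step.IH zW(1) z(2) by simp
      have r1: "reach (E - {{x,y}}) x z1" by (rule reach_step[OF r0]) (use z ne in simp)
      show ?case
      proof (intro ballI impI)
        fix y' assume "y' \<in> W" "g y' = s1"
        then have "reach (E - {{x,y}}) z1 y'" using fib zW z by simp
        then show "reach (E - {{x,y}}) x y'" by (rule reach_trans[OF r1])
      qed
    qed
    have "reach (E - {{x,y}}) x y" using lift[OF rpq] xyW xy by simp
    moreover have "x \<noteq> y" using xy pq by auto
    moreover have "\<forall>u w. {u, w} \<in> E \<and> u \<noteq> w \<longrightarrow> \<not> reach (E - {{u, w}}) u w"
      using tree unfolding is_tree_def by blast
    ultimately show False using xy(1) by blast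
  qed
  have tR: "is_tree R ER" unfolding is_tree_def using t1 t2 t3 by blast
  have scR: "single_crossing_tree A R pR ER"
    unfolding single_crossing_tree_def
  proof (intro ballI impI)
    fix a b assume ab: "a \<in> A" "b \<in> A" "a \<noteq> b"
    show "ab_cut R pR ER a b \<or> (\<forall>x\<in>R. prefers (pR x) a b) \<or> (\<forall>x\<in>R. prefers (pR x) b a)"
    proof (cases rule: sc_cases[OF sc ab])
      case (1 u w) note c1 = this
      have uW: "u \<in> W" and wW: "w \<in> W" using EV[OF c1(1)] by auto
      have pu: "prefers (pR (g u)) a b" using c1(3) uW compat ab by simp
      have pw: "prefers (pR (g w)) b a" using c1(4) wW compat ab by simp
      have gne: "g u \<noteq> g w"
      proof
        assume "g u = g w"
        then show False using pu pw strict_not[OF stR gR[rule_format, OF uW] ab] by simp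
      qed
      have "ab_cut R pR ER a b"
      proof (rule cut_unique[OF stR ab ERi[OF c1(1) gne] gne])
        show "g u \<in> R" "g w \<in> R" using gR uW wW by auto
        show "prefers (pR (g u)) a b" "prefers (pR (g w)) b a" by fact+
        fix r s assume "{r,s} \<in> ER - {{g u, g w}}"
        then have e: "{r,s} \<in> ER" "{r,s} \<noteq> {g u, g w}" by auto
        obtain z0 z1 where z: "{z0,z1} \<in> E" "g z0 = r" "g z1 = s" using ERe[OF e(1)] by blast
        have zW: "z0 \<in> W" "z1 \<in> W" using EV[OF z(1)] by auto
        have ne: "{z0,z1} \<noteq> {u,w}" using e(2) z by auto
        have "prefers (pW z0) a b \<longleftrightarrow> prefers (pW z1) a b"
          by (rule cut_cross[OF tree stW ab c1(1) c1(3) c1(4) z(1) ne])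
        then show "prefers (pR r) a b \<longleftrightarrow> prefers (pR s) a b" using compat zW z ab by auto
      qed
      then show ?thesis by simp
    next
      case 2 note ab2 = this
      have "\<forall>x\<in>R. prefers (pR x) a b"
      proof
        fix r assume "r \<in> R" then obtain x where "x \<in> W" "r = g x" using surj by blast
        then show "prefers (pR r) a b" using ab2 compat ab by auto
      qed
      then show ?thesis by simp
    next
      case 3 note ba = this
      have "\<forall>x\<in>R. prefers (pR x) b a"
      proof
        fix r assume "r \<in> R" then obtain x where "x \<in> W" "r = g x" using surj by blast
        then show "prefers (pR r) b a" using ba compat ab by auto
      qed
      then show ?thesis by simp
    qed
  qed
  show ?thesis using tR scR by blast
qed



lemma reach_isolated: assumes "reach F x y" "\<And>z. {x,z} \<notin> F" shows "y = x"
  using assms(1)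
proof (induction rule: reach_induct)
  case base then show ?case by simp
next
  case (step s t) then show ?case using assms(2) by blast
qed

lemma blowup:
  assumes tree: "is_tree V E" and sc: "single_crossing_tree A V pV E"
    and stV: "strict A pV V" and stW: "strict A pW W"
    and fV: "\<forall>x\<in>W. f x \<in> V" and surj: "V \<subseteq> f ` W"
    and compat: "\<forall>x\<in>W. \<forall>a\<in>A. \<forall>b\<in>A. prefers (pW x) a b \<longleftrightarrow> prefers (pV (f x)) a b"
  shows "\<exists>E'. is_tree W E' \<and> single_crossing_tree A W pW E'"
proof -
  define s where "s v = (SOME x. x \<in> W \<and> f x = v)" for v
  have sp: "s v \<in> W \<and> f (s v) = v" if "v \<in> V" for v
  proof -
    have "\<exists>x. x \<in> W \<and> f x = v" using surj that by blast
    then show ?thesis unfolding s_def by (rule someI_ex)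
  qed
  have EV: "\<And>x y. {x,y} \<in> E \<Longrightarrow> x \<in> V \<and> y \<in> V" using tree_edgeV[OF tree] by blast
  have Ene: "x \<noteq> y" if hxy: "{x,y} \<in> E" for x y
  proof -
    have "\<forall>e\<in>E. \<exists>u w. e = {u, w} \<and> u \<noteq> w \<and> u \<in> V \<and> w \<in> V" using tree unfolding is_tree_def by (rule conjunct1)
    then have "\<exists>u w. {x,y} = {u, w} \<and> u \<noteq> w \<and> u \<in> V \<and> w \<in> V" using hxy by (rule bspec)
    then obtain u w where "{x,y} = {u,w}" "u \<noteq> w" by iprover
    then show ?thesis by (auto simp: doubleton_eq_iff)
  qed
  define E1 where "E1 = {{s v, s v'} | v v'. {v,v'} \<in> E}"
  define E2 where "E2 = {{x, s (f x)} | x. x \<in> W \<and> x \<noteq> s (f x)}"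
  define EW where "EW = E1 \<union> E2"
  have E1e: "\<exists>v v'. {v,v'} \<in> E \<and> s v = a \<and> s v' = b" if h: "{a,b} \<in> E1" for a b
  proof -
    have "\<exists>v v'. {a,b} = {s v, s v'} \<and> {v,v'} \<in> E" using h unfolding E1_def by (simp only: mem_Collect_eq)
    then obtain v v' where vv: "{a,b} = {s v, s v'}" "{v,v'} \<in> E" by iprover
    from doubleton_cases[OF vv(1)] show ?thesis
    proof
      assume "a = s v \<and> b = s v'" then show ?thesis using vv(2) by iprover
    next
      assume h2: "a = s v' \<and> b = s v"
      have "{v',v} \<in> E" using vv(2) by (simp add: insert_commute)
      then show ?thesis using h2 by metis
    qed
  qed
  have E2e: "\<exists>x. x \<in> W \<and> x \<noteq> s (f x) \<and> ((a = x \<and> b = s (f x)) \<or> (b = x \<and> a = s (f x)))"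
    if h: "{a,b} \<in> E2" for a b
  proof -
    have "\<exists>x. {a,b} = {x, s (f x)} \<and> x \<in> W \<and> x \<noteq> s (f x)" using h unfolding E2_def by (simp only: mem_Collect_eq)
    then obtain x where x: "{a,b} = {x, s (f x)}" "x \<in> W" "x \<noteq> s (f x)" by iprover
    then show ?thesis using doubleton_cases[OF x(1)] by blast
  qed
  have EWW: "a \<in> W \<and> b \<in> W" if "{a,b} \<in> EW" for a b
  proof (cases "{a,b} \<in> E1")
    case True
    then obtain v v' where "{v,v'} \<in> E" "s v = a" "s v' = b" using E1e by blast
    then show ?thesis using EV sp by blast
  next
    case False
    then have "{a,b} \<in> E2" using that unfolding EW_def by blast
    then obtain x where "x \<in> W" "(a = x \<and> b = s (f x)) \<or> (b = x \<and> a = s (f x))" using E2e by blast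
    then show ?thesis using sp fV by auto
  qed
  have t1: "\<forall>e\<in>EW. \<exists>u w. e = {u, w} \<and> u \<noteq> w \<and> u \<in> W \<and> w \<in> W"
  proof
    fix e assume e: "e \<in> EW"
    show "\<exists>u w. e = {u, w} \<and> u \<noteq> w \<and> u \<in> W \<and> w \<in> W"
    proof (cases "e \<in> E1")
      case True
      then obtain v v' where vv: "e = {s v, s v'}" "{v,v'} \<in> E" unfolding E1_def by blast
      have "v \<noteq> v'" by (rule Ene[OF vv(2)])
      then have "s v \<noteq> s v'" using sp EV[OF vv(2)] by metis
      then show ?thesis using vv sp EV[OF vv(2)] by blast
    next
      case False
      then have "e \<in> E2" using e unfolding EW_def by blast
      then obtain x where "e = {x, s (f x)}" "x \<in> W" "x \<noteq> s (f x)" unfolding E2_def by blast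
      then show ?thesis using sp fV by blast
    qed
  qed
  have tos: "reach EW x (s (f x))" if "x \<in> W" for x
  proof (cases "x = s (f x)")
    case True then show ?thesis by simp
  next
    case False then have "{x, s (f x)} \<in> EW" using that unfolding EW_def E2_def by blast
    then show ?thesis by (rule reach_edge)
  qed
  have liftE: "reach EW (s v) (s v')" if "reach E v v'" for v v'
    using that by (rule reach_map) (unfold EW_def E1_def, blast)
  have t2: "\<forall>u\<in>W. \<forall>w\<in>W. reach EW u w"
  proof (intro ballI)
    fix x y assume xy: "x \<in> W" "y \<in> W"
    have "reach E (f x) (f y)" using tree fV xy unfolding is_tree_def by blast
    then have "reach EW (s (f x)) (s (f y))" by (rule liftE)
    then have "reach EW x (s (f y))" by (rule reach_trans[OF tos[OF xy(1)]])
    then show "reach EW x y" by (rule reach_trans) (rule reach_sym[OF tos[OF xy(2)]])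
  qed
  have bridgeV: "\<not> reach (E - {{u, w}}) u w" if "{u,w} \<in> E" for u w
    using tree that Ene[OF that] unfolding is_tree_def by blast
  have t3: "\<not> reach (EW - {{p, q}}) p q" if pq: "{p,q} \<in> EW" "p \<noteq> q" for p q
  proof
    assume rpq: "reach (EW - {{p, q}}) p q"
    show False
    proof (cases "{p,q} \<in> E1")
      case True
      then obtain v v' where vv: "{v,v'} \<in> E" "s v = p" "s v' = q" using E1e by blast
      have vV: "v \<in> V" "v' \<in> V" using EV[OF vv(1)] by auto
      have "reach (E - {{v,v'}}) (f p) (f q)" using rpq
      proof (rule reach_map)
        fix a b assume ab: "{a,b} \<in> EW - {{p,q}}"
        show "f a = f b \<or> {f a, f b} \<in> E - {{v,v'}}"
        proof (cases "{a,b} \<in> E1")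
          case True
          then obtain t t' where tt: "{t,t'} \<in> E" "s t = a" "s t' = b" using E1e by blast
          have tV: "t \<in> V" "t' \<in> V" using EV[OF tt(1)] by auto
          have "{t,t'} \<noteq> {v,v'}" using ab tt vv by auto
          then show ?thesis using tt tV sp by auto
        next
          case False
          then have "{a,b} \<in> E2" using ab unfolding EW_def by blast
          then obtain x where "x \<in> W" "(a = x \<and> b = s (f x)) \<or> (b = x \<and> a = s (f x))" using E2e by blast
          then show ?thesis using sp fV by auto
        qed
      qed
      moreover have "f p = v" "f q = v'" using vv sp vV by auto
      ultimately have "reach (E - {{v,v'}}) v v'" by simp
      then show False using bridgeV[OF vv(1)] by simp
    next
      case False
      then have "{p,q} \<in> E2" using pq unfolding EW_def by blast
      then obtain x where x: "x \<in> W" "x \<noteq> s (f x)" "(p = x \<and> q = s (f x)) \<or> (q = x \<and> p = s (f x))"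
        using E2e by blast
      have iso: "{x,z} \<notin> EW - {{p,q}}" for z
      proof
        assume h: "{x,z} \<in> EW - {{p,q}}"
        show False
        proof (cases "{x,z} \<in> E1")
          case True
          then obtain t t' where tt: "{t,t'} \<in> E" "s t = x" "s t' = z" using E1e by blast
          then have "f x = t" using sp EV by blast
          then show False using tt x by simp
        next
          case False
          then have "{x,z} \<in> E2" using h unfolding EW_def by blast
          then obtain y where y: "y \<in> W" "(x = y \<and> z = s (f y)) \<or> (z = y \<and> x = s (f y))" using E2e by blast
          from y(2) show False
          proof
            assume "x = y \<and> z = s (f y)" then show False using h x by auto
          next
            assume h3: "z = y \<and> x = s (f y)"
            then have "f x = f y" using sp fV y by metis
            then show False using h3 x by simp
          qed
        qed
      qed
      from x(3) show False
      proof
        assume "p = x \<and> q = s (f x)"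
        then show False using reach_isolated[OF rpq] iso pq by auto
      next
        assume h4: "q = x \<and> p = s (f x)"
        have "reach (EW - {{p, q}}) q p" by (rule reach_sym[OF rpq])
        then show False using reach_isolated[of "EW - {{p, q}}" q p] iso pq h4 by auto
      qed
    qed
  qed
  have tW: "is_tree W EW" unfolding is_tree_def using t1 t2 t3 by blast
  have scW: "single_crossing_tree A W pW EW"
    unfolding single_crossing_tree_def
  proof (intro ballI impI)
    fix a b assume ab: "a \<in> A" "b \<in> A" "a \<noteq> b"
    show "ab_cut W pW EW a b \<or> (\<forall>x\<in>W. prefers (pW x) a b) \<or> (\<forall>x\<in>W. prefers (pW x) b a)"
    proof (cases rule: sc_cases[OF sc ab])
      case (1 u w) note c1 = this
      have uV: "u \<in> V" and wV: "w \<in> V" using EV[OF c1(1)] by auto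
      have su: "s u \<in> W" "f (s u) = u" using sp uV by auto
      have sw: "s w \<in> W" "f (s w) = w" using sp wV by auto
      have pu: "prefers (pW (s u)) a b" using c1(3) uV su compat ab by simp
      have pw: "prefers (pW (s w)) b a" using c1(4) wV sw compat ab by simp
      have sne: "s u \<noteq> s w" using su sw c1(2) by metis
      have ed: "{s u, s w} \<in> EW" using c1(1) unfolding EW_def E1_def by blast
      have "ab_cut W pW EW a b"
      proof (rule cut_unique[OF stW ab ed sne su(1) sw(1) pu pw])
        fix r t assume rt: "{r,t} \<in> EW - {{s u, s w}}"
        show "prefers (pW r) a b \<longleftrightarrow> prefers (pW t) a b"
        proof (cases "{r,t} \<in> E1")
          case True
          then obtain v v' where vv: "{v,v'} \<in> E" "s v = r" "s v' = t" using E1e by blast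
          have vV: "v \<in> V" "v' \<in> V" using EV[OF vv(1)] by auto
          have ne: "{v,v'} \<noteq> {u,w}" using rt vv by auto
          have "prefers (pV v) a b \<longleftrightarrow> prefers (pV v') a b"
            by (rule cut_cross[OF tree stV ab c1(1) c1(3) c1(4) vv(1) ne])
          then show ?thesis using compat sp vV vv ab by metis
        next
          case False
          then have "{r,t} \<in> E2" using rt unfolding EW_def by blast
          then obtain x where x: "x \<in> W" "(r = x \<and> t = s (f x)) \<or> (t = x \<and> r = s (f x))" using E2e by blast
          have "s (f x) \<in> W" "f (s (f x)) = f x" using sp fV x(1) by auto
          then have "prefers (pW (s (f x))) a b \<longleftrightarrow> prefers (pW x) a b" using compat x(1) ab by metis
          then show ?thesis using x(2) by auto
        qed
      qed
      then show ?thesis by simp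
    next
      case 2 then show ?thesis using compat fV ab by auto
    next
      case 3 then show ?thesis using compat fV ab by auto
    qed
  qed
  show ?thesis using tW scW by blast
qed



lemma lin_strict:
  assumes "linear_order_on A r" "a \<in> A" "b \<in> A" "a \<noteq> b"
  shows "prefers r a b \<longleftrightarrow> \<not> prefers r b a"
  using assms unfolding linear_order_on_def partial_order_on_def total_on_def antisym_def prefers_def
  by blast

lemma strict_sub: "strict A p V \<Longrightarrow> U \<subseteq> V \<Longrightarrow> strict A p U"
  unfolding strict_def by blast

theorem lemma1:
  fixes A :: "'a set" and n :: nat and P :: "nat \<Rightarrow> 'a rel" and k :: "nat \<Rightarrow> nat"
  assumes "finite A"
    and "\<forall>i<n. linear_order_on A (P i)"
    and "\<forall>i<n. \<forall>j<n. i \<noteq> j \<longrightarrow> P i \<noteq> P j"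
    and "\<forall>i<n. k i > 0"
  shows "(\<exists>E. is_tree {..<n} E \<and> single_crossing_tree A {..<n} P E) \<longleftrightarrow>
         (\<exists>E. is_tree {(i, j). i < n \<and> j < k i} E \<and>
              single_crossing_tree A {(i, j). i < n \<and> j < k i} (\<lambda>(i, j). P i) E)"
proof -
  define Q where "Q = {(i, j). i < n \<and> j < k i}"
  define pQ where "pQ = (\<lambda>(i::nat, j::nat). P i)"
  have pQ: "pQ x = P (fst x)" for x unfolding pQ_def by (simp add: case_prod_beta)
  have stP: "strict A P {..<n}" unfolding strict_def
  proof (intro ballI impI)
    fix x a b assume h: "x \<in> {..<n}" "a \<in> A" "b \<in> A" "a \<noteq> b"
    have "linear_order_on A (P x)" using assms(2) h(1) by simp
    then show "prefers (P x) a b = (\<not> prefers (P x) b a)" using h(2-4) by (rule lin_strict)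
  qed
  have stQ: "strict A pQ Q" unfolding strict_def
  proof (intro ballI impI)
    fix x a b assume h: "x \<in> Q" "a \<in> A" "b \<in> A" "a \<noteq> b"
    have "fst x \<in> {..<n}" using h(1) unfolding Q_def by auto
    then show "prefers (pQ x) a b = (\<not> prefers (pQ x) b a)" using stP h(2-4) unfolding pQ strict_def by blast
  qed
  have fstQ: "\<forall>x\<in>Q. fst x \<in> {..<n}" unfolding Q_def by auto
  have i0: "(i, 0) \<in> Q" if "i < n" for i using that assms(4) unfolding Q_def by auto
  show ?thesis unfolding Q_def[symmetric] pQ_def[symmetric]
  proof
    assume "\<exists>E. is_tree {..<n} E \<and> single_crossing_tree A {..<n} P E"
    then obtain E where E: "is_tree {..<n} E" "single_crossing_tree A {..<n} P E" by blast
    show "\<exists>E. is_tree Q E \<and> single_crossing_tree A Q pQ E"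
    proof (rule blowup[OF E stP stQ fstQ])
      show "{..<n} \<subseteq> fst ` Q" using i0 by force
      show "\<forall>x\<in>Q. \<forall>a\<in>A. \<forall>b\<in>A. prefers (pQ x) a b = prefers (P (fst x)) a b" by (simp add: pQ)
    qed
  next
    assume "\<exists>E. is_tree Q E \<and> single_crossing_tree A Q pQ E"
    then obtain E where E: "is_tree Q E" "single_crossing_tree A Q pQ E" by blast
    define rep where "rep i = (LEAST i'. same A P i' i)" for i
    have rep_same: "same A P (rep i) i" for i
      unfolding rep_def by (rule LeastI[of _ i]) (simp add: same_def)
    have rep_le: "rep i \<le> i" for i
      unfolding rep_def by (rule Least_le) (simp add: same_def)
    have rep_eq: "rep i = rep i'" if "same A P i i'" for i i'
    proof -
      have "(\<lambda>i''. same A P i'' i) = (\<lambda>i''. same A P i'' i')"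
        using that same_trans same_sym by (metis)
      then show ?thesis unfolding rep_def by simp
    qed
    define R0 where "R0 = rep ` {..<n}"
    have R0sub: "R0 \<subseteq> {..<n}" unfolding R0_def using rep_le by (auto intro: le_less_trans)
    have stR: "strict A P R0" by (rule strict_sub[OF stP R0sub])
    have "\<exists>E'. is_tree R0 E' \<and> single_crossing_tree A R0 P E'"
    proof (rule quot[OF E stQ stR, of "\<lambda>x. rep (fst x)"])
      show "\<forall>x\<in>Q. rep (fst x) \<in> R0" unfolding R0_def Q_def by auto
      show "R0 \<subseteq> (\<lambda>x. rep (fst x)) ` Q"
      proof
        fix r assume "r \<in> R0"
        then obtain i where "i < n" "r = rep i" unfolding R0_def by auto
        then show "r \<in> (\<lambda>x. rep (fst x)) ` Q" using i0 by force
      qed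
      show "\<forall>x\<in>Q. \<forall>a\<in>A. \<forall>b\<in>A. prefers (pQ x) a b = prefers (P (rep (fst x))) a b"
        using rep_same unfolding same_def pQ by simp
      show "\<forall>x\<in>Q. \<forall>y\<in>Q. same A pQ x y \<longrightarrow> rep (fst x) = rep (fst y)"
      proof (intro ballI impI)
        fix x y assume "same A pQ x y"
        then have "same A P (fst x) (fst y)" unfolding same_def pQ .
        then show "rep (fst x) = rep (fst y)" by (rule rep_eq)
      qed
    qed
    then obtain E0 where E0: "is_tree R0 E0" "single_crossing_tree A R0 P E0" by blast
    show "\<exists>E. is_tree {..<n} E \<and> single_crossing_tree A {..<n} P E"
    proof (rule blowup[OF E0 stR stP])
      show "\<forall>x\<in>{..<n}. rep x \<in> R0" unfolding R0_def by auto
      show "R0 \<subseteq> rep ` {..<n}" unfolding R0_def by simp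
      show "\<forall>x\<in>{..<n}. \<forall>a\<in>A. \<forall>b\<in>A. prefers (P x) a b = prefers (P (rep x)) a b"
        using rep_same unfolding same_def by simp
    qed
  qed
qed


end
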